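(* Let $p$ be analytic in $\mathbb{D}$ with $p(0)=1$ and let $Q\in\mathcal{P}$. Suppose that $\alpha\geq 0$, $\beta>0$ and that $p$ satisfies $$p(z)Q(z)+\frac{zp'(z)}{\beta p(z)+\alpha}=1\qquad(z\in\mathbb{D}).$$ Then $\operatorname{Re}p(z)>0$ for all $z\in\mathbb{D}$.
   Context: $\mathbb{D}$ is the open unit disk. $\mathcal{P}$ (the Carathéodory class) is the class of analytic functions $q(z)=1+c_1z+c_2z^2+\cdots$ in $\mathbb{D}$ with $\operatorname{Re}q(z)>0$ for all $z\in\mathbb{D}$. *)

theory Defs
  imports "HOL-Complex_Analysis.Complex_Analysis"
begin

definition caratheodory_class :: "(complex \<Rightarrow> complex) set" where
  "caratheodory_class = {q. q analytic_on ball 0 1 \<and> q 0 = 1 \<and>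
                            (\<forall>z\<in>ball 0 1. Re (q z) > 0)}"

end

theory Submission
  imports Defs
begin

lemma dir_lemma:
  fixes p :: "complex \<Rightarrow> complex"
  assumes d: "(p has_field_derivative d) (at z0)"
    and pos: "\<forall>z. norm z < norm z0 \<longrightarrow> Re (p z) > 0"
    and z0: "z0 \<noteq> 0" and neg: "Re (p z0) \<le> 0"
  shows "Re (p z0) \<ge> 0 \<and> Re (d * z0 * Complex (-1) t) \<ge> 0"
proof -
  define v where "v = z0 * Complex (-1) t"
  define f where "f = (\<lambda>h::real. Re (p (z0 + of_real h * v)))"
  have vd: "((\<lambda>h::real. z0 + of_real h * v) has_vector_derivative v) (at 0)"
    by (auto intro!: derivative_eq_intros simp: has_vector_derivative_def scaleR_conv_of_real)
  have cd: "(((p \<circ> (\<lambda>h::real. z0 + of_real h * v))) has_vector_derivative (v * d)) (at 0)"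
    using field_vector_diff_chain_at[OF vd] d by simp
  have fd: "(f has_field_derivative Re (v * d)) (at 0)"
    using has_field_derivative_Re[OF cd] unfolding f_def o_def .
  have ev: "eventually (\<lambda>h. f h > 0) (at_right 0)"
    unfolding eventually_at_right_field
  proof (intro exI[of _ "2/(1+t^2)"] conjI allI impI)
    show "0 < 2/(1+t^2)" by (simp add: add_pos_nonneg)
    fix h :: real assume h: "0 < h" "h < 2/(1+t^2)"
    have "h * (1+t^2) < 2" using h by (simp add: field_simps add_pos_nonneg)
    hence "h * (2 - h*(1+t^2)) > 0" using h(1) by (intro mult_pos_pos) auto
    moreover have "(1-h)^2 + (h*t)^2 = 1 - h * (2 - h*(1+t^2))"
      by (simp add: power2_eq_square algebra_simps)
    ultimately have lt: "(1-h)^2 + (h*t)^2 < 1" by linarith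
    have eq: "z0 + of_real h * v = z0 * Complex (1-h) (h*t)"
      unfolding v_def by (simp add: complex_eq_iff algebra_simps)
    have "cmod (Complex (1-h) (h*t)) < 1"
      using lt by (simp add: cmod_def)
    hence "norm (z0 + of_real h * v) < norm z0"
      unfolding eq norm_mult using z0 by simp
    thus "f h > 0" using pos unfolding f_def by blast
  qed
  have fc: "(f \<longlongrightarrow> f 0) (at_right 0)"
    using DERIV_isCont[OF fd] by (simp add: isCont_def filterlim_at_split)
  have f0: "f 0 \<ge> 0"
    by (rule tendsto_lowerbound[OF fc]) (use ev in \<open>auto elim: eventually_mono\<close>)
  have "((\<lambda>h. (f (0 + h) - f 0) / h) \<longlongrightarrow> Re (v * d)) (at_right 0)"
    using fd unfolding DERIV_def by (simp add: filterlim_at_split)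
  moreover have "eventually (\<lambda>h. (f (0 + h) - f 0) / h \<ge> 0) (at_right 0)"
    using ev eventually_at_right_less[of "0::real"]
    by eventually_elim (use neg in \<open>auto simp: f_def\<close>)
  ultimately have "Re (v * d) \<ge> 0"
    by (rule tendsto_lowerbound) simp
  thus ?thesis using f0 unfolding f_def v_def by (simp add: mult_ac)
qed

theorem mainTheorem4:
  fixes p Q :: "complex \<Rightarrow> complex" and \<alpha> \<beta> :: real
  assumes "p analytic_on ball 0 1" and "p 0 = 1"
    and "Q \<in> caratheodory_class"
    and "\<alpha> \<ge> 0" and "\<beta> > 0"
    and "\<forall>z\<in>ball 0 1. of_real \<beta> * p z + of_real \<alpha> \<noteq> 0"
    and "\<forall>z\<in>ball 0 1. p z * Q z + z * deriv p z / (of_real \<beta> * p z + of_real \<alpha>) = 1"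
  shows "\<forall>z\<in>ball 0 1. Re (p z) > 0"
proof (rule ccontr)
  assume "\<not> ?thesis"
  then obtain z1 where z1: "z1 \<in> ball 0 1" "Re (p z1) \<le> 0" by auto
  have hol: "p holomorphic_on ball 0 1" using assms(1) analytic_imp_holomorphic by blast
  have cont: "continuous_on (ball 0 1) p" using hol holomorphic_on_imp_continuous_on by blast
  define R where "R = norm z1"
  have sub: "cball 0 R \<subseteq> ball 0 1" using z1 unfolding R_def by auto
  define S where "S = cball 0 R \<inter> (\<lambda>z. Re (p z)) -` {..0}"
  have "closed S" unfolding S_def
    by (intro continuous_closed_preimage continuous_intros continuous_on_subset[OF cont sub]) auto
  moreover have "bounded S" unfolding S_def by (intro bounded_Int) auto
  ultimately have "compact S" using compact_eq_bounded_closed by blast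
  moreover have "z1 \<in> S" using z1 unfolding S_def R_def by auto
  ultimately obtain z0 where z0S: "z0 \<in> S" and mn: "\<forall>y\<in>S. norm z0 \<le> norm y"
    using continuous_attains_inf[of S norm] continuous_on_norm_id by blast
  have "z0 \<in> cball 0 R" and neg: "Re (p z0) \<le> 0" using z0S unfolding S_def by auto
  hence z0b: "z0 \<in> ball 0 1" using sub by blast
  have z0nz: "z0 \<noteq> 0" using neg assms(2) by auto
  have pos: "\<forall>z. norm z < norm z0 \<longrightarrow> Re (p z) > 0"
  proof (intro allI impI)
    fix z :: complex assume "norm z < norm z0"
    moreover have "norm z0 \<le> R" using z0S unfolding S_def by auto
    ultimately have "z \<in> cball 0 R" "\<not> norm z0 \<le> norm z" by auto
    hence "z \<notin> S" using mn by auto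
    thus "Re (p z) > 0" using \<open>z \<in> cball 0 R\<close> unfolding S_def by auto
  qed
  define d where "d = deriv p z0"
  have dd: "(p has_field_derivative d) (at z0)"
    unfolding d_def using hol z0b by (auto intro!: holomorphic_derivI)
  note L = dir_lemma[OF dd pos z0nz neg]
  define c where "c = d * z0"
  have p0: "Re (p z0) = 0" using L neg by auto
  have c1: "Re c \<le> 0" using L[of 0] unfolding c_def by (simp add: complex_eq_iff)
  have c2: "Im c = 0"
  proof (rule ccontr)
    assume ne: "Im c \<noteq> 0"
    have "0 \<le> Re (c * Complex (-1) ((1 - Re c) / Im c))" using L unfolding c_def by blast
    also have "Re (c * Complex (-1) ((1 - Re c) / Im c)) = -1" using ne by (simp add: field_simps)
    finally show False by simp
  qed
  have eqn: "p z0 * Q z0 + c / (of_real \<beta> * p z0 + of_real \<alpha>) = 1"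
    using assms(7) z0b unfolding c_def d_def by (simp add: mult.commute)
  have nz: "of_real \<beta> * p z0 + of_real \<alpha> \<noteq> 0" using assms(6) z0b by auto
  have qpos: "Re (Q z0) > 0" using assms(3) z0b unfolding caratheodory_class_def by auto
  define \<rho> where "\<rho> = Im (p z0)"
  have pz: "p z0 = Complex 0 \<rho>" using p0 unfolding \<rho>_def by (simp add: complex_eq_iff)
  have eq2: "p z0 * Q z0 * (of_real \<beta> * p z0 + of_real \<alpha>) + c = of_real \<beta> * p z0 + of_real \<alpha>"
    using eqn nz by (simp add: field_simps)
  obtain q1 q2 where qq: "Q z0 = Complex q1 q2" by (cases "Q z0")
  obtain a where ca: "c = Complex a 0" using c2 by (cases c) auto
  have re: "- \<rho>*\<rho>*\<beta>*q1 - \<rho>*\<alpha>*q2 + a = \<alpha>"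
    using arg_cong[OF eq2, of Re] unfolding pz qq ca by (simp add: algebra_simps)
  have im: "\<rho>*(q1*\<alpha> - q2*\<beta>*\<rho>) = \<beta>*\<rho>"
    using arg_cong[OF eq2, of Im] unfolding pz qq ca by (simp add: algebra_simps)
  have q1: "q1 > 0" using qpos qq by simp
  have a: "a \<le> 0" using c1 ca by simp
  show False
  proof (cases "\<rho> = 0")
    case True
    then show ?thesis using re a nz pz assms(4) by (auto simp: complex_eq_iff)
  next
    case False
    hence im': "q1*\<alpha> - q2*\<beta>*\<rho> = \<beta>" using im by simp
    have "q1 * (\<alpha>^2 + \<beta>^2*\<rho>^2) = \<beta> * a"
    proof -
      have "\<alpha>*(q1*\<alpha> - q2*\<beta>*\<rho>) = \<alpha>*\<beta>" using im' by simp
      hence "q1*\<alpha>^2 - \<beta>*(\<rho>*\<alpha>*q2) = \<alpha>*\<beta>" by (simp add: power2_eq_square algebra_simps)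
      moreover have "\<beta>*(\<rho>*\<alpha>*q2) = \<beta>*(a - \<alpha> - \<rho>*\<rho>*\<beta>*q1)" using re by simp
      ultimately show ?thesis by (simp add: power2_eq_square algebra_simps)
    qed
    moreover have "q1 * (\<alpha>^2 + \<beta>^2*\<rho>^2) > 0" using q1 False assms(5)
      by (intro mult_pos_pos) (auto intro: add_nonneg_pos)
    moreover have "\<beta> * a \<le> 0" using a assms(5) by (simp add: mult_pos_neg mult_nonneg_nonpos)
    ultimately show False by linarith
  qed
qed

end
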